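(* For every $n\ge 3$ with $n\ne 4$, the wheel $W_n$ is distance antimagic; the wheel $W_4$ is not distance antimagic.
   Context: The wheel $W_n$ ($n\ge3$) is obtained from a cycle $x_1x_2\cdots x_nx_1$ by adding a center vertex $x_0$ adjacent to all $x_1,\dots,x_n$; it has $n+1$ vertices. For a graph $G=(V,E)$ with $v=|V|$ and a bijection $f:V\to\{1,\dots,v\}$, the vertex-weight of $x$ is $w(x)=\sum_{y\in N(x)}f(y)$ with $N(x)$ the set of neighbours of $x$. $G$ is distance antimagic if it admits a bijection $f$ under which all vertex-weights are pairwise distinct. *)

theory Defs
  imports Main
begin

text \<open>A finite simple graph given by a vertex set V and a symmetric irreflexive
adjacency relation adj. Open neighbourhood of x.\<close>
definition nbhd :: "'a set \<Rightarrow> ('a \<Rightarrow> 'a \<Rightarrow> bool) \<Rightarrow> 'a \<Rightarrow> 'a set" where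
  "nbhd V adj x = {y \<in> V. adj x y}"

definition vweight :: "'a set \<Rightarrow> ('a \<Rightarrow> 'a \<Rightarrow> bool) \<Rightarrow> ('a \<Rightarrow> nat) \<Rightarrow> 'a \<Rightarrow> nat" where
  "vweight V adj f x = (\<Sum>y\<in>nbhd V adj x. f y)"

definition distance_antimagic :: "'a set \<Rightarrow> ('a \<Rightarrow> 'a \<Rightarrow> bool) \<Rightarrow> bool" where
  "distance_antimagic V adj \<longleftrightarrow>
     (\<exists>f. bij_betw f V {1..card V} \<and> inj_on (vweight V adj f) V)"

text \<open>The wheel W_n: vertices 0..n, centre 0, rim cycle 1,2,...,n,1.\<close>
definition wheel_V :: "nat \<Rightarrow> nat set" where
  "wheel_V n = {0..n}"

definition wheel_adj :: "nat \<Rightarrow> nat \<Rightarrow> nat \<Rightarrow> bool" where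
  "wheel_adj n x y \<longleftrightarrow>
     x \<in> {0..n} \<and> y \<in> {0..n} \<and> x \<noteq> y \<and>
     (x = 0 \<or> y = 0 \<or> y = x mod n + 1 \<or> x = y mod n + 1)"

end

theory Submission
  imports Defs
begin

definition nxt :: "nat \<Rightarrow> nat \<Rightarrow> nat" where "nxt n i = (if i = n then 1 else i + 1)"
definition prv :: "nat \<Rightarrow> nat \<Rightarrow> nat" where "prv n i = (if i = 1 then n else i - 1)"

lemma nbhd0: "3 \<le> n \<Longrightarrow> nbhd (wheel_V n) (wheel_adj n) 0 = {1..n}"
  unfolding nbhd_def wheel_V_def wheel_adj_def by auto

lemma modp: "1 \<le> y \<Longrightarrow> y \<le> n \<Longrightarrow> y mod n + 1 = nxt n y"
  unfolding nxt_def by auto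

lemma nbhd_rim:
  assumes "3 \<le> n" "1 \<le> i" "i \<le> n"
  shows "nbhd (wheel_V n) (wheel_adj n) i = {0, prv n i, nxt n i}"
proof -
  have "y \<in> nbhd (wheel_V n) (wheel_adj n) i \<longleftrightarrow> y \<in> {0, prv n i, nxt n i}" for y
  proof (cases "y = 0")
    case True then show ?thesis using assms unfolding nbhd_def wheel_V_def wheel_adj_def by auto
  next
    case False
    have m1: "y mod n = y" if "y < n" using that by simp
    have m2: "i mod n = i" if "i < n" using that by simp
    show ?thesis using assms False
      unfolding nbhd_def wheel_V_def wheel_adj_def nxt_def prv_def
      by (cases "y < n"; cases "i < n") (auto simp: m1 m2)
  qed
  then show ?thesis by blast
qed

lemma vw_rim:
  assumes "3 \<le> n" "1 \<le> i" "i \<le> n"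
  shows "vweight (wheel_V n) (wheel_adj n) f i = f 0 + f (prv n i) + f (nxt n i)"
proof -
  have d: "prv n i \<noteq> nxt n i" "prv n i \<noteq> 0" "nxt n i \<noteq> 0"
    using assms unfolding prv_def nxt_def by auto
  show ?thesis unfolding vweight_def nbhd_rim[OF assms] using d by simp
qed

lemma vw0: "3 \<le> n \<Longrightarrow> vweight (wheel_V n) (wheel_adj n) f 0 = (\<Sum>i\<in>{1..n}. f i)"
  unfolding vweight_def nbhd0 by simp

lemma card_V: "card (wheel_V n) = n + 1" unfolding wheel_V_def by simp

lemma gauss2: "2 * (\<Sum>i\<in>{1..(m::nat)}. i) = m * (m + 1)"
  by (induction m) auto

lemma center_w:
  assumes "3 \<le> n" "bij_betw f (wheel_V n) {1..n+1}" "f 0 = n + 1"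
  shows "2 * vweight (wheel_V n) (wheel_adj n) f 0 = n * (n + 1)"
proof -
  have "(\<Sum>i\<in>{0..n}. f i) = (\<Sum>i\<in>{1..n+1}. i)"
    using sum.reindex_bij_betw[OF assms(2), of id] unfolding wheel_V_def by simp
  moreover have "(\<Sum>i\<in>{0..n}. f i) = f 0 + (\<Sum>i\<in>{1..n}. f i)"
    by (simp add: sum.atLeast_Suc_atMost)
  moreover have "2 * (\<Sum>i\<in>{1..n+1}. i) = (n+1)*(n+2)" using gauss2[of "n+1"] by simp
  ultimately have "2 * (\<Sum>i\<in>{1..n}. f i) + 2*(n+1) = (n+1)*(n+2)" using assms(3) by simp
  then show ?thesis using vw0[OF assms(1)] by (simp add: algebra_simps)
qed


definition fo :: "nat \<Rightarrow> nat \<Rightarrow> nat" where "fo n i = (if i = 0 then n + 1 else i)"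
definition fe :: "nat \<Rightarrow> nat \<Rightarrow> nat" where
  "fe n i = (if i = 0 then n + 1 else if i = 1 then n else if i = n then 1 else i)"

lemma fo_bij: "bij_betw (fo n) (wheel_V n) {1..n+1}"
proof (rule bij_betw_imageI)
  show "inj_on (fo n) (wheel_V n)" unfolding inj_on_def fo_def wheel_V_def by auto
  show "fo n ` wheel_V n = {1..n+1}"
  proof
    show "fo n ` wheel_V n \<subseteq> {1..n+1}" unfolding fo_def wheel_V_def by auto
    show "{1..n+1} \<subseteq> fo n ` wheel_V n"
    proof
      fix x assume x: "x \<in> {1..n+1}"
      show "x \<in> fo n ` wheel_V n"
      proof (cases "x = n+1")
        case True then show ?thesis unfolding wheel_V_def fo_def by (intro image_eqI[of _ _ 0]) auto
      next
        case False then show ?thesis using x unfolding wheel_V_def fo_def by (intro image_eqI[of _ _ x]) auto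
      qed
    qed
  qed
qed

lemma fe_bij: assumes "3 \<le> n" shows "bij_betw (fe n) (wheel_V n) {1..n+1}"
proof (rule bij_betw_imageI)
  show "inj_on (fe n) (wheel_V n)" using assms unfolding inj_on_def fe_def wheel_V_def by auto
  show "fe n ` wheel_V n = {1..n+1}"
  proof
    show "fe n ` wheel_V n \<subseteq> {1..n+1}" using assms unfolding fe_def wheel_V_def by auto
    show "{1..n+1} \<subseteq> fe n ` wheel_V n"
    proof
      fix x assume x: "x \<in> {1..n+1}"
      show "x \<in> fe n ` wheel_V n"
      proof (cases "x = n+1 \<or> x = n \<or> x = 1")
        case True
        have "fe n 0 = n+1" "fe n 1 = n" "fe n n = 1" using assms unfolding fe_def by auto
        moreover have "0 \<in> wheel_V n" "1 \<in> wheel_V n" "n \<in> wheel_V n" using assms unfolding wheel_V_def by auto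
        ultimately show ?thesis using True by (metis image_eqI)
      next
        case False then show ?thesis using x unfolding wheel_V_def fe_def by (intro image_eqI[of _ _ x]) auto
      qed
    qed
  qed
qed

lemma odd_s: "3 \<le> n \<Longrightarrow> 1 \<le> x \<Longrightarrow> x \<le> n \<Longrightarrow>
   fo n (prv n x) + fo n (nxt n x) = (if x = 1 then n + 2 else if x = n then n else 2 * x)"
  unfolding fo_def prv_def nxt_def by auto

lemma odd_rim:
  assumes "odd n" "3 \<le> n" "1 \<le> x" "x \<le> n" "1 \<le> y" "y \<le> n"
    and "fo n (prv n x) + fo n (nxt n x) = fo n (prv n y) + fo n (nxt n y)"
  shows "x = y"
proof -
  obtain k where k: "n = 2*k+1" using assms(1) oddE by blast
  have "(if x = 1 then n + 2 else if x = n then n else 2 * x) = (if y = 1 then n + 2 else if y = n then n else 2 * y)"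
    using assms(7) odd_s[OF assms(2,3,4)] odd_s[OF assms(2,5,6)] by simp
  then show ?thesis using assms(2-6) unfolding k
    apply (auto split: if_splits)
    apply presburger+
    done
qed

lemma even_s: "6 \<le> n \<Longrightarrow> 1 \<le> x \<Longrightarrow> x \<le> n \<Longrightarrow>
   fe n (prv n x) + fe n (nxt n x) = (if x = 1 then 3 else if x = 2 then n + 3 else if x = n - 1 then n - 1
     else if x = n then 2 * n - 1 else 2 * x)"
  unfolding fe_def prv_def nxt_def by auto

lemma even_rim:
  assumes "even n" "6 \<le> n" "1 \<le> x" "x \<le> n" "1 \<le> y" "y \<le> n"
    and "fe n (prv n x) + fe n (nxt n x) = fe n (prv n y) + fe n (nxt n y)"
  shows "x = y"
proof -
  obtain k where k: "n = 2*k" using assms(1) by blast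
  have "(if x = 1 then 3 else if x = 2 then n + 3 else if x = n - 1 then n - 1
     else if x = n then 2 * n - 1 else 2 * x) = (if y = 1 then 3 else if y = 2 then n + 3 else if y = n - 1 then n - 1
     else if y = n then 2 * n - 1 else 2 * y)"
    using assms(7) even_s[OF assms(2,3,4)] even_s[OF assms(2,5,6)] by simp
  then show ?thesis using assms(2-6) unfolding k
    apply (auto split: if_splits)
    apply presburger+
    done
qed

lemma odd_case:
  assumes "3 \<le> n" "odd n"
  shows "distance_antimagic (wheel_V n) (wheel_adj n)"
proof -
  let ?w = "vweight (wheel_V n) (wheel_adj n) (fo n)"
  have f0: "fo n 0 = n + 1" unfolding fo_def by simp
  have c: "2 * ?w 0 = n * (n + 1)" using center_w[OF assms(1) fo_bij f0] .
  have r: "?w y = n + 1 + (if y = 1 then n + 2 else if y = n then n else 2 * y)"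
    if "1 \<le> y" "y \<le> n" for y
    using vw_rim[OF assms(1) that, of "fo n"] odd_s[OF assms(1) that] f0 by simp
  have ne: "?w y \<noteq> ?w 0" if "1 \<le> y" "y \<le> n" for y
  proof (cases "n = 3")
    case True
    then show ?thesis using c r[OF that] that by auto
  next
    case False
    then have "5 \<le> n" using assms by presburger
    then have m: "5 * n \<le> n * n" by simp
    have b: "?w y \<le> 3 * n - 1" using r[OF that] that \<open>5 \<le> n\<close> by auto
    show ?thesis
    proof
      assume "?w y = ?w 0"
      moreover have "n * (n + 1) = n * n + n" by (simp add: algebra_simps)
      ultimately show False using b c m \<open>5 \<le> n\<close> by linarith
    qed
  qed
  have "inj_on ?w (wheel_V n)"
  proof (rule inj_onI)
    fix x y assume x: "x \<in> wheel_V n" and y: "y \<in> wheel_V n" and e: "?w x = ?w y"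
    show "x = y"
    proof (cases "x = 0 \<or> y = 0")
      case True then show ?thesis using ne x y e unfolding wheel_V_def
        by (metis One_nat_def Suc_leI atLeastAtMost_iff neq0_conv)
    next
      case False
      then have "1 \<le> x" "x \<le> n" "1 \<le> y" "y \<le> n" using x y unfolding wheel_V_def by auto
      then show ?thesis using e vw_rim[OF assms(1), of _ "fo n"] odd_rim[OF assms(2,1)] by simp
    qed
  qed
  then show ?thesis unfolding distance_antimagic_def card_V using fo_bij by blast
qed

lemma even_case:
  assumes "6 \<le> n" "even n"
  shows "distance_antimagic (wheel_V n) (wheel_adj n)"
proof -
  have n3: "3 \<le> n" using assms by simp
  let ?w = "vweight (wheel_V n) (wheel_adj n) (fe n)"
  have f0: "fe n 0 = n + 1" unfolding fe_def by simp
  have c: "2 * ?w 0 = n * (n + 1)" using center_w[OF n3 fe_bij[OF n3] f0] .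
  have r: "?w y = n + 1 + (if y = 1 then 3 else if y = 2 then n + 3 else if y = n - 1 then n - 1
     else if y = n then 2 * n - 1 else 2 * y)"
    if "1 \<le> y" "y \<le> n" for y
    using vw_rim[OF n3 that, of "fe n"] even_s[OF assms(1) that] f0 by simp
  have ne: "?w y \<noteq> ?w 0" if "1 \<le> y" "y \<le> n" for y
  proof -
    have m: "6 * n \<le> n * n" using assms by simp
    have b: "?w y \<le> 3 * n" using r[OF that] that assms by auto
    show ?thesis
    proof
      assume "?w y = ?w 0"
      then show False using b c m assms by (simp add: algebra_simps)
    qed
  qed
  have "inj_on ?w (wheel_V n)"
  proof (rule inj_onI)
    fix x y assume x: "x \<in> wheel_V n" and y: "y \<in> wheel_V n" and e: "?w x = ?w y"
    show "x = y"
    proof (cases "x = 0 \<or> y = 0")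
      case True then show ?thesis using ne x y e unfolding wheel_V_def
        by (metis One_nat_def Suc_leI atLeastAtMost_iff neq0_conv)
    next
      case False
      then have "1 \<le> x" "x \<le> n" "1 \<le> y" "y \<le> n" using x y unfolding wheel_V_def by auto
      then show ?thesis using e vw_rim[OF n3, of _ "fe n"] even_rim[OF assms(2,1)] by simp
    qed
  qed
  then show ?thesis unfolding distance_antimagic_def card_V using fe_bij[OF n3] by blast
qed

lemma w4: "\<not> distance_antimagic (wheel_V 4) (wheel_adj 4)"
proof
  assume "distance_antimagic (wheel_V 4) (wheel_adj 4)"
  then obtain f where i: "inj_on (vweight (wheel_V 4) (wheel_adj 4) f) (wheel_V 4)"
    unfolding distance_antimagic_def by blast
  have "vweight (wheel_V 4) (wheel_adj 4) f 1 = vweight (wheel_V 4) (wheel_adj 4) f 3"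
    using vw_rim[of 4 1 f] vw_rim[of 4 3 f] unfolding prv_def nxt_def by (simp add: numeral_2_eq_2)
  moreover have "(1::nat) \<in> wheel_V 4" "(3::nat) \<in> wheel_V 4" unfolding wheel_V_def by auto
  ultimately show False using i unfolding inj_on_def by fastforce
qed

theorem mainTheorem12:
  shows "(\<forall>n::nat. 3 \<le> n \<and> n \<noteq> 4 \<longrightarrow> distance_antimagic (wheel_V n) (wheel_adj n))
         \<and> \<not> distance_antimagic (wheel_V 4) (wheel_adj 4)"
proof (intro conjI allI impI w4)
  fix n :: nat assume a: "3 \<le> n \<and> n \<noteq> 4"
  show "distance_antimagic (wheel_V n) (wheel_adj n)"
  proof (cases "odd n")
    case True then show ?thesis using a odd_case by blast
  next
    case False
    then have "6 \<le> n" using a by presburger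
    then show ?thesis using False even_case by blast
  qed
qed

end
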